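(* Let the data $(I,1,c,\{h_a\},S,\{d_a\},\{\chi_a\})$ be as in the context, fix $a\in I$ and an integer $n\ge1$. For $x,y>0$ define $$\mathcal{T}_a(n;x,y)=\frac{\chi_a\!\left(ix+\tfrac1n\right)\,\chi_a\!\left(iy-\tfrac1n\right)}{\chi_a(ix)\,\chi_a(iy)},\qquad \zeta_{n,a}:=\sum_{b\in I}S_{ab}\,d_b\,\theta_b^n .$$ Assume $\zeta_{n,a}\neq0$. Then as $x\to\infty$ and $y\to0^+$ (independently), $\mathcal{T}_a(n;x,y)\ne 0$ eventually and $$\frac{\mathcal{T}_a(n;x,y)}{|\mathcal{T}_a(n;x,y)|}\;\longrightarrow\;e^{\frac{2\pi i}{n}h_a-2\pi i\left(\frac2n+n\right)\frac{c}{24}}\;\frac{\zeta_{n,a}}{|\zeta_{n,a}|},$$ i.e. $\mathcal{T}_a(n;x,y)$ is asymptotically a positive real multiple of $e^{\frac{2\pi i}{n}h_a-2\pi i(\frac2n+n)\frac{c}{24}}\,\zeta_{n,a}$.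
   Context: Data: $I$ is a finite index set with a distinguished element $1$. $c\in\mathbb{R}$. Real numbers $h_a$ ($a\in I$) with $h_1=0$ and $h_a>0$ for $a\neq 1$; set $\theta_a=e^{2\pi i h_a}$. Positive reals $d_a$ ($a\in I$) and $\mathcal{D}=\sqrt{\sum_a d_a^2}$. $S=(S_{ab})_{a,b\in I}$ is a complex matrix with $S_{a1}=S_{1a}=d_a/\mathcal{D}$ for all $a$. The functions $\chi_a$ ($a\in I$) are holomorphic on the upper half-plane $\mathbb{H}$ and have absolutely convergent expansions $\chi_a(\tau)=\sum_{k\ge 0}N_{a,k}\,e^{2\pi i\tau(h_a-c/24+k)}$ with nonnegative integers $N_{a,k}$, $N_{a,0}\ge1$ and $N_{1,0}=1$; they satisfy the modular covariance $\chi_a(-1/\tau)=\sum_b S_{ab}\chi_b(\tau)$ and $\chi_a(\tau+1)=e^{2\pi i(h_a-c/24)}\chi_a(\tau)$ for all $\tau\in\mathbb{H}$. For $a=1$ one has $\zeta_{n,1}=\mathcal{D}^{-1}\sum_b d_b^2\theta_b^n$. *)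

theory Defs
  imports "HOL-Analysis.Analysis"
begin

definition theta :: "('i \<Rightarrow> real) \<Rightarrow> 'i \<Rightarrow> complex" where
  "theta h a = exp (2 * of_real pi * \<i> * of_real (h a))"

definition zeta :: "'i set \<Rightarrow> ('i \<Rightarrow> 'i \<Rightarrow> complex) \<Rightarrow> ('i \<Rightarrow> real) \<Rightarrow> ('i \<Rightarrow> real)
                    \<Rightarrow> nat \<Rightarrow> 'i \<Rightarrow> complex" where
  "zeta I S d h n a = (\<Sum>b\<in>I. S a b * of_real (d b) * theta h b ^ n)"

definition Tfun :: "('i \<Rightarrow> complex \<Rightarrow> complex) \<Rightarrow> 'i \<Rightarrow> nat \<Rightarrow> real \<Rightarrow> real \<Rightarrow> complex" where
  "Tfun chi a n x y =
     chi a (\<i> * of_real x + 1 / of_nat n) * chi a (\<i> * of_real y - 1 / of_nat n)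
     / (chi a (\<i> * of_real x) * chi a (\<i> * of_real y))"

end

theory Submission imports Defs "HOL-Real_Asymp.Real_Asymp" begin
definition Fq :: "(nat \<Rightarrow> nat) \<Rightarrow> complex \<Rightarrow> complex" where
  "Fq Nb \<tau> = (\<Sum>k. of_nat (Nb k) * exp (2 * of_real pi * \<i> * \<tau> * of_real (real k)))"

lemma chi_F:
  assumes "(\<lambda>k. of_nat (Nb k) * exp (2 * of_real pi * \<i> * \<tau> * of_real (e + real k))) sums X"
  shows "X = exp (2 * of_real pi * \<i> * \<tau> * of_real e) * Fq Nb \<tau>"
proof -
  define E where "E = exp (2 * of_real pi * \<i> * \<tau> * of_real e)"
  have E0: "E \<noteq> 0" by (simp add: E_def)
  have eq: "\<And>k. of_nat (Nb k) * exp (2 * of_real pi * \<i> * \<tau> * of_real (e + real k))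
      = E * (of_nat (Nb k) * exp (2 * of_real pi * \<i> * \<tau> * of_real (real k)))"
    by (simp add: E_def distrib_left mult_exp_exp[symmetric] algebra_simps)
  have "(\<lambda>k. inverse E * (E * (of_nat (Nb k) * exp (2 * of_real pi * \<i> * \<tau> * of_real (real k))))) sums (inverse E * X)"
    using sums_mult[OF assms[unfolded eq], of "inverse E"] by simp
  hence "(\<lambda>k. of_nat (Nb k) * exp (2 * of_real pi * \<i> * \<tau> * of_real (real k))) sums (inverse E * X)"
    using E0 by (simp add: field_simps)
  hence "Fq Nb \<tau> = inverse E * X" unfolding Fq_def by (rule sums_unique[symmetric])
  thus ?thesis using E0 by (simp add: E_def[symmetric])
qed

lemma norm_term:
  fixes \<tau> :: complex
  shows "norm (of_nat m * exp (2 * of_real pi * \<i> * \<tau> * of_real r)) = real m * exp (-2*pi*Im \<tau> * r)"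
proof -
  have "Re (2 * of_real pi * \<i> * \<tau> * of_real r) = -2*pi*Im \<tau>*r" by simp
  thus ?thesis by (simp only: norm_mult norm_of_nat norm_exp_eq_Re) 
qed

lemma F_bound:
  assumes summ: "summable (\<lambda>k. norm (of_nat (Nb k) * exp (2 * of_real pi * \<i> * \<i> * of_real (e + real k))))"
  shows "\<exists>M. \<forall>\<tau>. 1 \<le> Im \<tau> \<longrightarrow> norm (Fq Nb \<tau> - of_nat (Nb 0)) \<le> M * exp (-2*pi*(Im \<tau> - 1))"
proof -
  define a where "a k = real (Nb k) * exp (-2*pi*real k)" for k
  have "\<And>k. norm (of_nat (Nb k) * exp (2 * of_real pi * \<i> * \<i> * of_real (e + real k))) = exp (-2*pi*e) * a k"
    unfolding norm_term a_def by (simp add: algebra_simps exp_diff exp_minus divide_inverse)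
  with summ have "summable (\<lambda>k. exp (-2*pi*e) * a k)" by simp
  hence "summable (\<lambda>k. exp (2*pi*e) * (exp (-2*pi*e) * a k))" by (rule summable_mult)
  hence suma: "summable a" by (simp add: mult.assoc[symmetric] mult_exp_exp[symmetric])
  hence suma1: "summable (\<lambda>k. a (Suc k))" by (simp add: summable_Suc_iff)
  show ?thesis
  proof (intro exI allI impI)
    fix \<tau> :: complex assume t1: "1 \<le> Im \<tau>"
    define f where "f k = of_nat (Nb k) * exp (2 * of_real pi * \<i> * \<tau> * of_real (real k))" for k
    have nf: "norm (f k) = real (Nb k) * exp (-2*pi*Im \<tau>*real k)" for k
      unfolding f_def norm_term by simp
    have nfa: "norm (f k) \<le> a k" for k
    proof -
      have "real k \<le> Im \<tau> * real k" using t1 mult_right_mono[of 1 "Im \<tau>" "real k"] by simp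
      hence "-2*pi*Im \<tau>*real k \<le> -2*pi*real k" using pi_gt_zero by (simp add: mult.assoc)
      thus ?thesis unfolding nf a_def by (intro mult_left_mono) auto
    qed
    have sumnf: "summable (\<lambda>k. norm (f k))"
      by (rule summable_comparison_test[OF _ suma]) (use nfa in auto)
    hence sumf: "summable f" by (rule summable_norm_cancel)
    have sumnf1: "summable (\<lambda>k. norm (f (Suc k)))" using summable_Suc_iff[of "\<lambda>k. norm (f k)"] sumnf by simp
    have f0: "f 0 = of_nat (Nb 0)" by (simp add: f_def)
    have "Fq Nb \<tau> - of_nat (Nb 0) = (\<Sum>k. f (Suc k))"
    proof -
      have "Fq Nb \<tau> = suminf f" unfolding Fq_def f_def ..
      thus ?thesis using suminf_split_head[OF sumf] f0 by simp
    qed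
    also have "norm \<dots> \<le> (\<Sum>k. norm (f (Suc k)))"
      by (rule summable_norm[OF sumnf1])
    also have "\<dots> \<le> (\<Sum>k. exp (-2*pi*(Im \<tau> - 1)) * a (Suc k))"
    proof (rule suminf_le)
      show "summable (\<lambda>k. norm (f (Suc k)))" by (rule sumnf1)
      show "summable (\<lambda>k. exp (-2*pi*(Im \<tau> - 1)) * a (Suc k))" by (rule summable_mult[OF suma1])
      fix k
      have "exp (-2*pi*Im \<tau>*real (Suc k)) \<le> exp (-2*pi*(Im \<tau> - 1)) * exp (-2*pi*real (Suc k))"
      proof -
        have "-2*pi*Im \<tau>*real (Suc k) \<le> -2*pi*(Im \<tau> - 1) + -2*pi*real (Suc k)"
        proof -
          have "Im \<tau> * real (Suc k) \<ge> Im \<tau> - 1 + real (Suc k)"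
            using t1 by (simp add: algebra_simps) (metis mult_left_mono mult.commute mult.right_neutral of_nat_0_le_iff order_trans linorder_le_cases)
          hence "2*pi*(Im \<tau> - 1 + real (Suc k)) \<le> 2*pi*(Im \<tau> * real (Suc k))"
            by (rule mult_left_mono) (use pi_gt_zero in auto)
          thus ?thesis by (simp add: algebra_simps)
        qed
        thus ?thesis by (simp add: mult_exp_exp)
      qed
      thus "norm (f (Suc k)) \<le> exp (-2*pi*(Im \<tau> - 1)) * a (Suc k)"
        unfolding nf a_def by (simp add: mult_left_mono algebra_simps del: of_nat_Suc)
    qed
    also have "\<dots> = (\<Sum>k. a (Suc k)) * exp (-2*pi*(Im \<tau> - 1))"
      using suminf_mult[OF suma1] by simp
    finally show "norm (Fq Nb \<tau> - of_nat (Nb 0)) \<le> (\<Sum>k. a (Suc k)) * exp (-2*pi*(Im \<tau> - 1))" .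
  qed
qed

lemma exp_neg_lim:
  assumes "filterlim g at_top F" "(0::real) < K"
  shows "((\<lambda>t. exp (- (K * g t))) \<longlongrightarrow> 0) F"
proof -
  have "filterlim (\<lambda>t. K * g t) at_top F"
    by (rule filterlim_tendsto_pos_mult_at_top[OF tendsto_const assms(2) assms(1)])
  hence "filterlim (\<lambda>t. - (K * g t)) at_bot F" by (simp add: filterlim_uminus_at_top)
  thus ?thesis by (rule filterlim_compose[OF exp_at_bot])
qed

lemma F_lim:
  assumes summ: "summable (\<lambda>k. norm (of_nat (Nb k) * exp (2 * of_real pi * \<i> * \<i> * of_real (e + real k))))"
    and lim: "filterlim (\<lambda>t. Im (g t)) at_top F"
  shows "((\<lambda>t. Fq Nb (g t)) \<longlongrightarrow> of_nat (Nb 0)) F"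
proof -
  obtain M where M: "\<And>\<tau>. 1 \<le> Im \<tau> \<Longrightarrow> norm (Fq Nb \<tau> - of_nat (Nb 0)) \<le> M * exp (-2*pi*(Im \<tau> - 1))"
    using F_bound[OF summ] by blast
  have ev: "eventually (\<lambda>t. 1 \<le> Im (g t)) F"
    using lim by (simp add: filterlim_at_top)
  have "((\<lambda>t. Fq Nb (g t) - of_nat (Nb 0)) \<longlongrightarrow> 0) F"
  proof (rule Lim_null_comparison)
    show "eventually (\<lambda>t. norm (Fq Nb (g t) - of_nat (Nb 0)) \<le> M * exp (-2*pi*(Im (g t) - 1))) F"
      using ev by eventually_elim (rule M)
    have "((\<lambda>s. M * exp (-2*pi*(s - 1))) \<longlongrightarrow> 0) at_top" by real_asymp
    thus "((\<lambda>t. M * exp (-2*pi*(Im (g t) - 1))) \<longlongrightarrow> 0) F"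
      by (rule filterlim_compose[OF _ lim])
  qed
  thus ?thesis using LIM_zero_iff by blast
qed

lemma Im_neg_inv_pos: "0 < Im u \<Longrightarrow> 0 < Im (-1 / u)"
proof -
  assume "0 < Im u"
  hence "u \<noteq> 0" by auto
  hence "0 < (Re u)^2 + (Im u)^2" by (simp add: complex_eq_iff sum_power2_gt_zero_iff)
  thus ?thesis using \<open>0 < Im u\<close> by (simp add: Im_divide)
qed

lemma expid:
  fixes s r hb c :: real
  shows "exp (2 * of_real pi * \<i> * (of_real s + \<i> * of_real r) * of_real (hb - c/24))
    = exp (2 * of_real pi * \<i> * of_real s * of_real (hb - c/24)) * (of_real (exp (2*pi*c/24*r)) * exp (of_real (-(2*pi*hb*r))))"
  apply (simp only: exp_of_real[symmetric] mult_exp_exp)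
  apply (rule arg_cong[where f=exp])
  apply (simp add: algebra_simps)
  done

theorem mainTheorem2:
  fixes I :: "'i set" and one :: 'i and c :: real and h :: "'i \<Rightarrow> real"
    and d :: "'i \<Rightarrow> real" and \<D> :: real and S :: "'i \<Rightarrow> 'i \<Rightarrow> complex"
    and chi :: "'i \<Rightarrow> complex \<Rightarrow> complex" and N :: "'i \<Rightarrow> nat \<Rightarrow> nat"
    and a :: 'i and n :: nat
  assumes finI: "finite I" and oneI: "one \<in> I"
    and h_one: "h one = 0"
    and h_pos: "\<And>b. b \<in> I \<Longrightarrow> b \<noteq> one \<Longrightarrow> h b > 0"
    and d_pos: "\<And>b. b \<in> I \<Longrightarrow> d b > 0"
    and D_def: "\<D> = sqrt (\<Sum>b\<in>I. (d b)\<^sup>2)"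
    and S_col1: "\<And>b. b \<in> I \<Longrightarrow> S b one = of_real (d b / \<D>)"
    and S_row1: "\<And>b. b \<in> I \<Longrightarrow> S one b = of_real (d b / \<D>)"
    and chi_holo: "\<And>b. b \<in> I \<Longrightarrow> chi b holomorphic_on {z. 0 < Im z}"
    and chi_abs: "\<And>b \<tau>. b \<in> I \<Longrightarrow> 0 < Im \<tau> \<Longrightarrow>
        summable (\<lambda>k. norm (of_nat (N b k) *
           exp (2 * of_real pi * \<i> * \<tau> * of_real (h b - c / 24 + real k))))"
    and chi_exp: "\<And>b \<tau>. b \<in> I \<Longrightarrow> 0 < Im \<tau> \<Longrightarrow>
        (\<lambda>k. of_nat (N b k) *
           exp (2 * of_real pi * \<i> * \<tau> * of_real (h b - c / 24 + real k))) sums chi b \<tau>"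
    and N0: "\<And>b. b \<in> I \<Longrightarrow> N b 0 \<ge> 1"
    and N10: "N one 0 = 1"
    and S_trans: "\<And>b \<tau>. b \<in> I \<Longrightarrow> 0 < Im \<tau> \<Longrightarrow>
        chi b (- 1 / \<tau>) = (\<Sum>b'\<in>I. S b b' * chi b' \<tau>)"
    and T_trans: "\<And>b \<tau>. b \<in> I \<Longrightarrow> 0 < Im \<tau> \<Longrightarrow>
        chi b (\<tau> + 1) = exp (2 * of_real pi * \<i> * of_real (h b - c / 24)) * chi b \<tau>"
    and aI: "a \<in> I" and n_pos: "n \<ge> 1"
    and zeta_nz: "zeta I S d h n a \<noteq> 0"
  shows "eventually (\<lambda>(x, y). Tfun chi a n x y \<noteq> 0) (at_top \<times>\<^sub>F at_right 0)
    \<and> ((\<lambda>(x, y). Tfun chi a n x y / of_real (norm (Tfun chi a n x y)))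
        \<longlongrightarrow> exp (2 * of_real pi * \<i> / of_nat n * of_real (h a)
                  - 2 * of_real pi * \<i> * (2 / of_nat n + of_nat n) * of_real (c / 24))
            * (zeta I S d h n a / of_real (norm (zeta I S d h n a))))
       (at_top \<times>\<^sub>F at_right 0)"
proof -
  define e where "e j = h j - c/24" for j
  have summ1: "summable (\<lambda>k. norm (of_nat (N j k) * exp (2* of_real pi*\<i>*\<i>* of_real (h j - c/24 + real k))))"
    if "j \<in> I" for j using chi_abs[OF that, of \<i>] by simp
  have chiF: "chi j \<tau> = exp (2* of_real pi*\<i>*\<tau>* of_real (h j - c/24)) * Fq (N j) \<tau>"
    if "j \<in> I" "0 < Im \<tau>" for j \<tau> by (rule chi_F[OF chi_exp[OF that]])
  have Flim: "((\<lambda>t. Fq (N j) (g t)) \<longlongrightarrow> of_nat (N j 0)) F"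
    if "j \<in> I" "filterlim (\<lambda>t. Im (g t)) at_top F" for j and g :: "'z \<Rightarrow> complex" and F
    by (rule F_lim[OF summ1[OF that(1)] that(2)])
  define X where "X j = exp (2 * of_real pi * \<i> * of_real (h j - c / 24))" for j
  have Tn: "chi j (\<sigma> + of_nat m) = X j ^ m * chi j \<sigma>" if "j \<in> I" "0 < Im \<sigma>" for j \<sigma> m
  proof (induction m)
    case 0 then show ?case by simp
  next
    case (Suc m)
    have "chi j (\<sigma> + of_nat (Suc m)) = chi j ((\<sigma> + of_nat m) + 1)" by (simp only: of_nat_Suc ac_simps)
    also have "\<dots> = X j * chi j (\<sigma> + of_nat m)" unfolding X_def using that by (intro T_trans) auto
    finally show ?case using Suc by simp
  qed
  have npos: "0 < real n" using n_pos by simp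
  have nne: "(of_nat n :: complex) \<noteq> 0" using n_pos by simp
  define Y where "Y j = exp (2 * of_real pi * \<i> * of_real (1 / real n) * of_real (h j - c/24))" for j
  define u where "u y = of_real (1 / real n) + \<i> * of_real (1 / (real n ^ 2 * y))" for y
  define Ex where "Ex j r = (exp (of_real (-(2*pi*h j*r))) :: complex)" for j r
  define B where "B y = (\<Sum>j\<in>I. S a j * Ex j (1/y) * Fq (N j) (\<i> * of_real (1/y)))" for y
  define A where "A y = (\<Sum>j\<in>I. S a j * X j ^ n * (\<Sum>k\<in>I. S j k * (Y k * Ex k (1/(real n^2*y)) * Fq (N k) (u y))))" for y
  define Q1 where "Q1 y = exp (2*pi*c/24*(1/(real n^2*y)))" for y
  define Q0 where "Q0 y = exp (2*pi*c/24*(1/y))" for y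
  have chiy: "chi a (\<i> * of_real y) = of_real (Q0 y) * B y" if "0 < y" for y
  proof -
    have im: "0 < Im (\<i> * of_real (1/y))" using that by simp
    have "-1 / (\<i> * of_real (1/y)) = \<i> * of_real y" using that by (simp add: field_simps)
    hence "chi a (\<i> * of_real y) = (\<Sum>j\<in>I. S a j * chi j (\<i> * of_real (1/y)))"
      using S_trans[OF aI im] by simp
    also have "\<dots> = (\<Sum>j\<in>I. S a j * (of_real (Q0 y) * (Ex j (1/y) * Fq (N j) (\<i> * of_real (1/y)))))"
    proof (rule sum.cong[OF refl])
      fix j assume j: "j \<in> I"
      have "chi j (\<i> * of_real (1/y)) = exp (2* of_real pi*\<i>*(of_real 0 + \<i> * of_real (1/y))* of_real (h j - c/24)) * Fq (N j) (\<i> * of_real (1/y))"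
        using chiF[OF j im] by simp
      also have "\<dots> = of_real (Q0 y) * (Ex j (1/y) * Fq (N j) (\<i> * of_real (1/y)))"
        unfolding expid Q0_def Ex_def by simp
      finally show "S a j * chi j (\<i> * of_real (1/y)) = S a j * (of_real (Q0 y) * (Ex j (1/y) * Fq (N j) (\<i> * of_real (1/y))))" by simp
    qed
    also have "\<dots> = of_real (Q0 y) * B y" unfolding B_def by (simp add: sum_distrib_left algebra_simps)
    finally show ?thesis .
  qed
  have chiyn: "chi a (\<i> * of_real y - 1 / of_nat n) = of_real (Q1 y) * A y" if "0 < y" for y
  proof -
    define r where "r = 1 / (real n ^ 2 * y)"
    have r0: "0 < r" using that npos by (simp add: r_def)
    have imu: "0 < Im (u y)" using r0 by (simp add: u_def r_def)
    define \<sigma> where "\<sigma> = -1 / u y"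
    have ims: "0 < Im \<sigma>" unfolding \<sigma>_def by (rule Im_neg_inv_pos[OF imu])
    define w where "w = \<sigma> + of_nat n"
    have imw: "0 < Im w" using ims by (simp add: w_def)
    have u0: "u y \<noteq> 0" using imu by auto
    have w0: "w \<noteq> 0" using imw by auto
    have D0: "\<i> * of_nat n + of_nat n * (of_nat n * of_real y) \<noteq> (0::complex)"
      using npos that by (simp add: complex_eq_iff)
    have "w * (\<i> * of_real y - 1 / of_nat n) = -1"
      using u0 npos that D0 unfolding w_def \<sigma>_def u_def by (simp add: field_simps power2_eq_square)
    hence weq: "-1 / w = \<i> * of_real y - 1 / of_nat n" using w0 by (simp add: field_simps)
    have "chi a (\<i> * of_real y - 1 / of_nat n) = (\<Sum>j\<in>I. S a j * chi j w)"
      using S_trans[OF aI imw] weq by simp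
    also have "\<dots> = (\<Sum>j\<in>I. S a j * (X j ^ n * (of_real (Q1 y) * (\<Sum>k\<in>I. S j k * (Y k * Ex k (1/(real n^2*y)) * Fq (N k) (u y))))))"
    proof (rule sum.cong[OF refl])
      fix j assume j: "j \<in> I"
      have "chi j w = X j ^ n * chi j \<sigma>" unfolding w_def by (rule Tn[OF j ims])
      also have "chi j \<sigma> = (\<Sum>k\<in>I. S j k * chi k (u y))" unfolding \<sigma>_def by (rule S_trans[OF j imu])
      also have "\<dots> = (\<Sum>k\<in>I. S j k * (of_real (Q1 y) * (Y k * Ex k (1/(real n^2*y)) * Fq (N k) (u y))))"
      proof (rule sum.cong[OF refl])
        fix k assume k: "k \<in> I"
        have "chi k (u y) = exp (2* of_real pi*\<i>*(of_real (1 / real n) + \<i> * of_real r)* of_real (h k - c/24)) * Fq (N k) (u y)"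
          using chiF[OF k imu] by (simp add: u_def r_def)
        also have "\<dots> = of_real (Q1 y) * (Y k * Ex k (1/(real n^2*y)) * Fq (N k) (u y))"
          unfolding expid Q1_def Ex_def Y_def r_def by simp
        finally show "S j k * chi k (u y) = S j k * (of_real (Q1 y) * (Y k * Ex k (1/(real n^2*y)) * Fq (N k) (u y)))" by simp
      qed
      also have "\<dots> = of_real (Q1 y) * (\<Sum>k\<in>I. S j k * (Y k * Ex k (1/(real n^2*y)) * Fq (N k) (u y)))"
        by (simp add: sum_distrib_left algebra_simps)
      finally show "S a j * chi j w = S a j * (X j ^ n * (of_real (Q1 y) * (\<Sum>k\<in>I. S j k * (Y k * Ex k (1/(real n^2*y)) * Fq (N k) (u y)))))" by simp
    qed
    also have "\<dots> = of_real (Q1 y) * A y" unfolding A_def by (simp add: sum_distrib_left algebra_simps)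
    finally show ?thesis .
  qed
  define F1 where "F1 x = Fq (N a) (\<i> * of_real x + 1 / of_nat n)" for x
  define F0 where "F0 x = Fq (N a) (\<i> * of_real x)" for x
  define G where "G x y = Y a * (F1 x * A y) / (F0 x * B y)" for x y
  define P where "P y = Q1 y / Q0 y" for y
  have Ppos: "0 < P y" for y by (simp add: P_def Q1_def Q0_def)
  have Tid: "Tfun chi a n x y = of_real (P y) * G x y" if "0 < x" "0 < y" for x y
  proof -
    define Rx where "Rx = of_real (exp (2*pi*c/24*x)) * Ex a x"
    have Rx0: "Rx \<noteq> 0" by (simp add: Rx_def Ex_def)
    have im1: "0 < Im (\<i> * of_real x + 1 / of_nat n)" using that by simp
    have im0: "0 < Im (\<i> * of_real x)" using that by simp
    have "chi a (\<i> * of_real x + 1 / of_nat n) = exp (2 * of_real pi * \<i> * (of_real (1/real n) + \<i> * of_real x) * of_real (h a - c/24)) * F1 x"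
      using chiF[OF aI im1] by (simp add: F1_def add.commute)
    also have "\<dots> = Y a * Rx * F1 x" unfolding expid Y_def Rx_def Ex_def by simp
    finally have c1: "chi a (\<i> * of_real x + 1 / of_nat n) = Y a * Rx * F1 x" .
    have "chi a (\<i> * of_real x) = exp (2 * of_real pi * \<i> * (of_real 0 + \<i> * of_real x) * of_real (h a - c/24)) * F0 x"
      using chiF[OF aI im0] by (simp add: F0_def)
    also have "\<dots> = Rx * F0 x" unfolding expid Rx_def Ex_def by simp
    finally have c0: "chi a (\<i> * of_real x) = Rx * F0 x" .
    have Q00: "Q0 y \<noteq> 0" by (simp add: Q0_def)
    show ?thesis
      unfolding Tfun_def c1 c0 chiy[OF that(2)] chiyn[OF that(2)] G_def P_def
      using Rx0 Q00 by (cases "F0 x * B y = 0") (auto simp: field_simps)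
  qed
  have inv_lim: "filterlim (\<lambda>y::real. 1 / y) at_top (at_right 0)"
    using filterlim_inverse_at_top_right by (simp add: inverse_eq_divide)
  have inv2_lim: "filterlim (\<lambda>y::real. 1 / (real n ^ 2 * y)) at_top (at_right 0)"
  proof -
    have "filterlim (\<lambda>y::real. (1 / real n ^ 2) * (1 / y)) at_top (at_right 0)"
      by (rule filterlim_tendsto_pos_mult_at_top[OF tendsto_const _ inv_lim]) (use npos in simp)
    thus ?thesis by simp
  qed
  have Exlim: "((\<lambda>t. Ex j (g t)) \<longlongrightarrow> (if j = one then 1 else 0)) F"
    if "j \<in> I" "filterlim g at_top F" for j and g :: "'z \<Rightarrow> real" and F
  proof (cases "j = one")
    case True thus ?thesis by (simp add: Ex_def h_one)
  next
    case False
    have hp: "0 < 2 * pi * h j" using h_pos[OF that(1) False] by simp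
    have "((\<lambda>t. exp (- (2 * pi * h j * g t))) \<longlongrightarrow> 0) F" by (rule exp_neg_lim[OF that(2) hp])
    hence "((\<lambda>t. complex_of_real (exp (- (2 * pi * h j * g t)))) \<longlongrightarrow> complex_of_real 0) F"
      by (rule tendsto_of_real)
    moreover have "Ex j r = complex_of_real (exp (- (2 * pi * h j * r)))" for r
      unfolding Ex_def by (rule exp_of_real)
    ultimately show ?thesis using False by simp
  qed
  define B0 where "B0 = (\<Sum>j\<in>I. S a j * (if j = one then 1 else 0) * of_nat (N j 0))"
  have limB: "(B \<longlongrightarrow> B0) (at_right 0)"
    unfolding B_def B0_def
  proof (intro tendsto_sum tendsto_mult tendsto_const)
    fix j assume j: "j \<in> I"
    show "((\<lambda>y. Ex j (1 / y)) \<longlongrightarrow> (if j = one then 1 else 0)) (at_right 0)" by (rule Exlim[OF j inv_lim])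
    show "((\<lambda>y. Fq (N j) (\<i> * of_real (1 / y))) \<longlongrightarrow> of_nat (N j 0)) (at_right 0)"
      by (rule Flim[OF j]) (simp add: inv_lim)
  qed
  define A0 where "A0 = (\<Sum>j\<in>I. S a j * X j ^ n * (\<Sum>k\<in>I. S j k * (Y k * (if k = one then 1 else 0) * of_nat (N k 0))))"
  have limA: "(A \<longlongrightarrow> A0) (at_right 0)"
    unfolding A_def A0_def
  proof (intro tendsto_sum tendsto_mult tendsto_const)
    fix k assume k: "k \<in> I"
    show "((\<lambda>y. Ex k (1 / (real n ^ 2 * y))) \<longlongrightarrow> (if k = one then 1 else 0)) (at_right 0)" by (rule Exlim[OF k inv2_lim])
    show "((\<lambda>y. Fq (N k) (u y)) \<longlongrightarrow> of_nat (N k 0)) (at_right 0)"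
      by (rule Flim[OF k]) (simp add: inv2_lim u_def)
  qed
  have limF1: "(F1 \<longlongrightarrow> of_nat (N a 0)) at_top"
    unfolding F1_def by (rule Flim[OF aI]) (simp add: filterlim_ident)
  have limF0: "(F0 \<longlongrightarrow> of_nat (N a 0)) at_top"
    unfolding F0_def by (rule Flim[OF aI]) (simp add: filterlim_ident)
  have Dpos: "0 < \<D>"
  proof -
    have "(d a)^2 \<le> (\<Sum>b\<in>I. (d b)\<^sup>2)" by (rule member_le_sum[OF aI _ finI]) auto
    moreover have "0 < (d a)^2" using d_pos[OF aI] by simp
    ultimately have "0 < (\<Sum>b\<in>I. (d b)\<^sup>2)" by linarith
    thus ?thesis unfolding D_def by simp
  qed
  have da: "0 < d a" by (rule d_pos[OF aI])
  have B0eq: "B0 = S a one"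
  proof -
    have "B0 = (\<Sum>j\<in>I. if j = one then S a j * of_nat (N j 0) else 0)"
      unfolding B0_def by (rule sum.cong) auto
    also have "\<dots> = S a one" using finI oneI N10 by simp
    finally show ?thesis .
  qed
  define W where "W = exp (2 * of_real pi * \<i> * of_real (- c / 24))"
  have Xeq: "X j = theta h j * W" for j
    unfolding X_def theta_def W_def by (simp only: mult_exp_exp) (rule arg_cong[where f=exp], simp add: algebra_simps)
  have A0eq: "A0 = (W ^ n * Y one / of_real \<D>) * zeta I S d h n a"
  proof -
    have "A0 = (\<Sum>j\<in>I. S a j * X j ^ n * (S j one * Y one))"
      unfolding A0_def
    proof (rule sum.cong[OF refl])
      fix j assume j: "j \<in> I"
      have "(\<Sum>k\<in>I. S j k * (Y k * (if k = one then 1 else 0) * of_nat (N k 0))) = (\<Sum>k\<in>I. if k = one then S j k * Y k * of_nat (N k 0) else 0)"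
        by (rule sum.cong) auto
      also have "\<dots> = S j one * Y one" using finI oneI N10 by simp
      finally show "S a j * X j ^ n * (\<Sum>k\<in>I. S j k * (Y k * (if k = one then 1 else 0) * of_nat (N k 0))) = S a j * X j ^ n * (S j one * Y one)" by simp
    qed
    also have "\<dots> = (\<Sum>j\<in>I. (W ^ n * Y one / of_real \<D>) * (S a j * of_real (d j) * theta h j ^ n))"
      by (rule sum.cong[OF refl]) (simp add: Xeq S_col1 power_mult_distrib field_simps)
    also have "\<dots> = (W ^ n * Y one / of_real \<D>) * zeta I S d h n a"
      unfolding zeta_def by (simp add: sum_distrib_left)
    finally show ?thesis .
  qed
  define K where "K = Y a * Y one * W ^ n"
  have KL: "K = exp (2 * of_real pi * \<i> / of_nat n * of_real (h a)
                  - 2 * of_real pi * \<i> * (2 / of_nat n + of_nat n) * of_real (c / 24))"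
    unfolding K_def Y_def W_def
    by (simp only: exp_of_nat_mult[symmetric] mult_exp_exp h_one) (rule arg_cong[where f=exp], use nne in \<open>simp add: field_simps\<close>)
  define G0 where "G0 = Y a * (of_nat (N a 0) * A0) / (of_nat (N a 0) * B0)"
  have Na0: "(of_nat (N a 0) :: complex) \<noteq> 0" using N0[OF aI] by simp
  have Sa1: "S a one = of_real (d a / \<D>)" by (rule S_col1[OF aI])
  have G0eq: "G0 = K * zeta I S d h n a / of_real (d a)"
    unfolding G0_def B0eq A0eq Sa1 K_def using Na0 Dpos da by (simp add: field_simps)
  have normK: "norm K = 1" unfolding KL by simp
  define z where "z = zeta I S d h n a"
  have z0: "z \<noteq> 0" using zeta_nz by (simp add: z_def)
  have G00: "G0 \<noteq> 0" using G0eq normK z0 da by (auto simp: z_def)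
  have nG0: "norm G0 = norm z / d a" unfolding G0eq using normK da by (simp add: z_def norm_mult norm_divide)
  have G0L: "G0 / of_real (norm G0) = K * (z / of_real (norm z))"
    unfolding nG0 unfolding G0eq z_def[symmetric] using da z0 by (simp add: field_simps)
  define FF where "FF = (at_top \<times>\<^sub>F at_right (0::real) :: (real \<times> real) filter)"
  have GL: "((\<lambda>p. G (fst p) (snd p)) \<longlongrightarrow> G0) FF"
  proof -
    have l1: "((\<lambda>p. F1 (fst p)) \<longlongrightarrow> of_nat (N a 0)) FF" unfolding FF_def
      by (rule filterlim_compose[OF limF1 filterlim_fst])
    have l0: "((\<lambda>p. F0 (fst p)) \<longlongrightarrow> of_nat (N a 0)) FF" unfolding FF_def
      by (rule filterlim_compose[OF limF0 filterlim_fst])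
    have lA: "((\<lambda>p. A (snd p)) \<longlongrightarrow> A0) FF" unfolding FF_def
      by (rule filterlim_compose[OF limA filterlim_snd])
    have lB: "((\<lambda>p. B (snd p)) \<longlongrightarrow> B0) FF" unfolding FF_def
      by (rule filterlim_compose[OF limB filterlim_snd])
    have "B0 \<noteq> 0" using B0eq Sa1 da Dpos by simp
    hence "of_nat (N a 0) * B0 \<noteq> 0" using Na0 by simp
    thus ?thesis unfolding G_def G0_def
      by (intro tendsto_intros l1 l0 lA lB)
  qed
  have ev: "eventually (\<lambda>p. 0 < fst p \<and> 0 < snd p) FF"
    unfolding FF_def eventually_prod_filter
    by (intro exI[of _ "\<lambda>x. 0 < x"] exI[of _ "\<lambda>y. 0 < y"]) (auto intro: eventually_gt_at_top eventually_at_right_less)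
  have evG: "eventually (\<lambda>p. G (fst p) (snd p) \<noteq> 0) FF"
    by (rule tendsto_imp_eventually_ne[OF GL G00])
  have part1: "eventually (\<lambda>(x, y). Tfun chi a n x y \<noteq> 0) FF"
    using ev evG
  proof eventually_elim
    case (elim p)
    obtain x y where p: "p = (x, y)" by (cases p)
    show ?case using elim Tid[of x y] Ppos[of y] by (simp add: p)
  qed
  have eq2: "eventually (\<lambda>p. G (fst p) (snd p) / of_real (norm (G (fst p) (snd p)))
       = (\<lambda>(x, y). Tfun chi a n x y / of_real (norm (Tfun chi a n x y))) p) FF"
    using ev
  proof eventually_elim
    case (elim p)
    obtain x y where p: "p = (x, y)" by (cases p)
    have P0: "0 < P y" by (rule Ppos)
    show ?case using elim P0 Tid[of x y]
      by (cases "G x y = 0") (simp_all add: p norm_mult field_simps)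
  qed
  have "((\<lambda>p. G (fst p) (snd p) / of_real (norm (G (fst p) (snd p)))) \<longlongrightarrow> G0 / of_real (norm G0)) FF"
    using G00 by (intro tendsto_intros GL) simp
  hence part2: "((\<lambda>(x, y). Tfun chi a n x y / of_real (norm (Tfun chi a n x y))) \<longlongrightarrow> G0 / of_real (norm G0)) FF"
    by (rule Lim_transform_eventually[OF _ eq2])
  show ?thesis using part1 part2 unfolding FF_def G0L KL z_def by simp
qed

end
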